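(* Let $H,K$ be $d\times d$ Hermitian matrices with $HK\ne KH$, and define the $2d\times2d$ Hermitian matrices $H_1:=H\oplus H$, $H_2:=(-H)\oplus(-K)$, $H_3:=K\oplus K$. Then: any two of $H_1,H_2,H_3$ do not commute; each $H_j$ does not commute with $H_k+H_l$ for any $k\ne l$; each $H_j$ does not commute with $H_1+H_2+H_3$. Nevertheless $\mathrm{Tr}\,e^{H_1+H_2+H_3}=\mathrm{Tr}\,e^{H_1}e^{H_2}e^{H_3}$, and for every $r>0$, \[ \mathrm{Tr}\,\exp\bigl(r(H_1+H_2+H_3)\bigr)=\int_{-\infty}^\infty\mathrm{Tr}\,\big|e^{(1+it)H_1}e^{(1+it)H_2}e^{(1+it)H_3}\big|^r\,d\beta_0(t). \]
   Context: $|X|:=(X^*X)^{1/2}$. $\beta_0$ is the probability measure on $\mathbb{R}$ with density $\frac{\pi}{2(\cosh(\pi t)+1)}$, the $\theta\searrow0$ limit of $d\beta_\theta(t)=\frac{\sin(\pi\theta)}{2\theta(\cosh(\pi t)+\cos(\pi\theta))}dt$. For general Hermitian $H_1,\dots,H_n$ one has the multivariate Golden--Thompson inequality $\mathrm{Tr}\exp(r\sum_j H_j)\le\int\mathrm{Tr}|\prod_j e^{(1+it)H_j}|^r d\beta_0(t)$; the claim is that equality holds here. *)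

theory Defs
  imports "HOL-Analysis.Analysis" "Jordan_Normal_Form.Schur_Decomposition"
begin

definition hermitian_mat :: "nat \<Rightarrow> complex mat \<Rightarrow> bool" where
  "hermitian_mat n A \<longleftrightarrow> A \<in> carrier_mat n n \<and> mat_adjoint A = A"

definition unitary_mat :: "nat \<Rightarrow> complex mat \<Rightarrow> bool" where
  "unitary_mat n U \<longleftrightarrow> U \<in> carrier_mat n n \<and> U * mat_adjoint U = 1\<^sub>m n
     \<and> mat_adjoint U * U = 1\<^sub>m n"

definition mat_exp :: "complex mat \<Rightarrow> complex mat" where
  "mat_exp A = mat (dim_row A) (dim_col A)
     (\<lambda>(i,j). \<Sum>k. (A ^\<^sub>m k) $$ (i,j) / of_nat (fact k))"

text \<open>Functional calculus for Hermitian matrices: if A = U D U^* with U unitary and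
  D real diagonal, then f(A) = U f(D) U^*.\<close>
definition herm_fun :: "(real \<Rightarrow> real) \<Rightarrow> complex mat \<Rightarrow> complex mat" where
  "herm_fun f A = (SOME B. \<exists>U D. unitary_mat (dim_row A) U \<and> D \<in> carrier_mat (dim_row A) (dim_row A)
      \<and> diagonal_mat D \<and> (\<forall>i < dim_row A. D $$ (i,i) \<in> \<real>)
      \<and> A = U * D * mat_adjoint U
      \<and> B = U * mat (dim_row A) (dim_row A)
              (\<lambda>(i,j). if i = j then complex_of_real (f (Re (D $$ (i,i)))) else 0)
            * mat_adjoint U)"

definition mat_abs :: "complex mat \<Rightarrow> complex mat" where
  "mat_abs X = herm_fun sqrt (mat_adjoint X * X)"

definition mat_abs_pow :: "complex mat \<Rightarrow> real \<Rightarrow> complex mat" where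
  "mat_abs_pow X r = herm_fun (\<lambda>x. x powr r) (mat_abs X)"

definition mtrace :: "complex mat \<Rightarrow> complex" where
  "mtrace A = (\<Sum>i<dim_row A. A $$ (i,i))"

definition dsum_mat :: "complex mat \<Rightarrow> complex mat \<Rightarrow> complex mat" where
  "dsum_mat A B = four_block_mat A (0\<^sub>m (dim_row A) (dim_col B)) (0\<^sub>m (dim_row B) (dim_col A)) B"

definition beta0 :: "real measure" where
  "beta0 = density lborel (\<lambda>t. ennreal (pi / (2 * (cosh (pi * t) + 1))))"

end

theory Submission
  imports Defs "HOL-Real_Asymp.Real_Asymp"
begin

lemma adj_dims[simp]: "dim_row (mat_adjoint A) = dim_col A" "dim_col (mat_adjoint A) = dim_row A"
  by (auto simp: mat_adjoint_def)
lemma adj_index[simp]: "i < dim_col A \<Longrightarrow> j < dim_row A \<Longrightarrow> mat_adjoint A $$ (i,j) = cnj (A $$ (j,i))"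
  by (auto simp: mat_adjoint_def mat_of_rows_def)
lemma adj_carrier[simp]: "A \<in> carrier_mat n m \<Longrightarrow> mat_adjoint A \<in> carrier_mat m n"
  unfolding carrier_mat_def by simp

definition dg :: "nat \<Rightarrow> (nat \<Rightarrow> complex) \<Rightarrow> complex mat" where
  "dg n g = mat n n (\<lambda>(i,j). if i = j then g i else 0)"
definition ud :: "nat \<Rightarrow> complex mat \<Rightarrow> (nat \<Rightarrow> complex) \<Rightarrow> complex mat" where
  "ud n U g = U * dg n g * mat_adjoint U"

lemma dg_carrier[simp]: "dg n g \<in> carrier_mat n n" unfolding dg_def by (rule mat_carrier)
lemma dg_dims[simp]: "dim_row (dg n g) = n" "dim_col (dg n g) = n" unfolding dg_def by simp_all
lemma dg_index[simp]: "i < n \<Longrightarrow> j < n \<Longrightarrow> dg n g $$ (i,j) = (if i = j then g i else 0)"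
  unfolding dg_def by simp

lemma mult_index': "i < dim_row A \<Longrightarrow> j < dim_col B \<Longrightarrow> dim_col A = dim_row B \<Longrightarrow>
   (A * B) $$ (i,j) = (\<Sum>k<dim_row B. A $$ (i,k) * B $$ (k,j))"
  by (simp add: index_mult_mat scalar_prod_def atLeast0LessThan)

lemma ud_carrier[simp]: "U \<in> carrier_mat n n \<Longrightarrow> ud n U g \<in> carrier_mat n n"
  unfolding ud_def by (meson adj_carrier dg_carrier mult_carrier_mat)
lemma ud_index: assumes U: "U \<in> carrier_mat n n" and i: "i < n" and j: "j < n"
  shows "ud n U g $$ (i,j) = (\<Sum>a<n. U $$ (i,a) * g a * cnj (U $$ (j,a)))"
proof -
  have 1: "(U * dg n g) $$ (i,a) = U $$ (i,a) * g a" if "a < n" for a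
    using U i that by (simp add: mult_index' if_distrib del: index_mult_mat(1) cong: if_cong)
  show ?thesis using U i j unfolding ud_def
    by (simp add: mult_index' carrier_matD if_distrib del: index_mult_mat(1) cong: if_cong)
qed

lemma unitaryD: assumes "unitary_mat n U"
  shows "U \<in> carrier_mat n n" "U * mat_adjoint U = 1\<^sub>m n" "mat_adjoint U * U = 1\<^sub>m n"
  using assms by (auto simp: unitary_mat_def)

lemma mid_cancel: assumes "unitary_mat n U" "A \<in> carrier_mat k n" "B \<in> carrier_mat n m"
  shows "(A * mat_adjoint U) * (U * B) = A * B"
proof -
  note u = unitaryD[OF assms(1)]
  have "(A * mat_adjoint U) * (U * B) = A * (mat_adjoint U * (U * B))"
    by (rule assoc_mult_mat[of _ k n _ n _ m]) (use assms u in auto)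
  also have "mat_adjoint U * (U * B) = (mat_adjoint U * U) * B"
    by (rule assoc_mult_mat[symmetric, of _ n n _ n _ m]) (use assms u in auto)
  finally show ?thesis using u assms by simp
qed

lemma ud_mult: assumes "unitary_mat n U"
  shows "ud n U g * ud n U h = ud n U (\<lambda>a. g a * h a)"
proof -
  note u = unitaryD[OF assms]
  have d: "dg n g * dg n h = dg n (\<lambda>a. g a * h a)"
    by (rule eq_matI) (simp_all add: mult_index' if_distrib del: index_mult_mat(1) cong: if_cong)
  have c1: "dg n h * mat_adjoint U \<in> carrier_mat n n" using u by auto
  have c2: "U * dg n g \<in> carrier_mat n n" using u by auto
  have e1: "U * dg n h * mat_adjoint U = U * (dg n h * mat_adjoint U)"
    by (rule assoc_mult_mat[of _ n n _ n _ n]) (use u in auto)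
  have e2: "U * dg n g * (dg n h * mat_adjoint U) = U * (dg n g * (dg n h * mat_adjoint U))"
    by (rule assoc_mult_mat[of _ n n _ n _ n]) (use u in auto)
  have e3: "dg n g * (dg n h * mat_adjoint U) = (dg n g * dg n h) * mat_adjoint U"
    by (rule assoc_mult_mat[symmetric, of _ n n _ n _ n]) (use u in auto)
  have e4: "U * (dg n (\<lambda>a. g a * h a) * mat_adjoint U) = ud n U (\<lambda>a. g a * h a)"
    unfolding ud_def by (rule assoc_mult_mat[symmetric, of _ n n _ n _ n]) (use u in auto)
  have "ud n U g * ud n U h = U * dg n g * (dg n h * mat_adjoint U)"
    unfolding ud_def e1 by (rule mid_cancel[OF assms c2 c1])
  also have "\<dots> = ud n U (\<lambda>a. g a * h a)" unfolding e2 e3 d e4 ..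
  finally show ?thesis .
qed


lemma unitary_adj_col: assumes "unitary_mat n U" "a < n" "b < n"
  shows "(\<Sum>i<n. cnj (U $$ (i,a)) * U $$ (i,b)) = (if a = b then 1 else 0)"
proof -
  note u = unitaryD[OF assms(1)]
  have "(mat_adjoint U * U) $$ (a,b) = (\<Sum>i<n. cnj (U $$ (i,a)) * U $$ (i,b))"
    using u(1) assms by (simp add: mult_index' carrier_matD del: index_mult_mat(1))
  then show ?thesis using u(3) assms by simp
qed

lemma dg_one: "dg n (\<lambda>_. 1) = 1\<^sub>m n"
  by (rule eq_matI) auto

lemma ud_one: assumes "unitary_mat n U" shows "ud n U (\<lambda>_. 1) = 1\<^sub>m n"
proof -
  note u = unitaryD[OF assms]
  have "U * 1\<^sub>m n = U" using u(1) by simp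
  then show ?thesis using u unfolding ud_def dg_one by simp
qed

lemma ud_eqI: assumes "U \<in> carrier_mat n n" "A \<in> carrier_mat n n"
  and "\<And>i j. i < n \<Longrightarrow> j < n \<Longrightarrow> A $$ (i,j) = (\<Sum>a<n. U $$ (i,a) * g a * cnj (U $$ (j,a)))"
  shows "A = ud n U g"
proof -
  have c: "ud n U g \<in> carrier_mat n n" using assms(1) by simp
  show ?thesis
    by (rule eq_matI) (use assms carrier_matD[OF c] carrier_matD[OF assms(2)] in \<open>auto simp: ud_index\<close>)
qed

lemma ud_adj: assumes "U \<in> carrier_mat n n"
  shows "mat_adjoint (ud n U g) = ud n U (\<lambda>a. cnj (g a))"
proof (rule ud_eqI[OF assms])
  show "mat_adjoint (ud n U g) \<in> carrier_mat n n" using assms by simp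
  fix i j assume ij: "i < n" "j < n"
  have "mat_adjoint (ud n U g) $$ (i,j) = cnj (ud n U g $$ (j,i))"
    using ij assms by (simp add: carrier_matD[OF ud_carrier[OF assms]])
  also have "\<dots> = (\<Sum>a<n. U $$ (i,a) * cnj (g a) * cnj (U $$ (j,a)))"
    using ij assms by (simp add: ud_index mult_ac)
  finally show "mat_adjoint (ud n U g) $$ (i,j) = (\<Sum>a<n. U $$ (i,a) * cnj (g a) * cnj (U $$ (j,a)))" .
qed

lemma ud_smult: assumes "U \<in> carrier_mat n n"
  shows "c \<cdot>\<^sub>m ud n U g = ud n U (\<lambda>a. c * g a)"
proof (rule ud_eqI[OF assms])
  show "c \<cdot>\<^sub>m ud n U g \<in> carrier_mat n n" using assms by simp
  fix i j assume ij: "i < n" "j < n"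
  show "(c \<cdot>\<^sub>m ud n U g) $$ (i,j) = (\<Sum>a<n. U $$ (i,a) * (c * g a) * cnj (U $$ (j,a)))"
    using ij assms by (simp add: ud_index sum_distrib_left mult_ac carrier_matD[OF ud_carrier[OF assms]])
qed

lemma ud_uminus: assumes "U \<in> carrier_mat n n"
  shows "- ud n U g = ud n U (\<lambda>a. - g a)"
proof (rule ud_eqI[OF assms])
  show "- ud n U g \<in> carrier_mat n n" using assms by simp
  fix i j assume ij: "i < n" "j < n"
  show "(- ud n U g) $$ (i,j) = (\<Sum>a<n. U $$ (i,a) * (- g a) * cnj (U $$ (j,a)))"
    using ij assms by (simp add: ud_index sum_negf carrier_matD[OF ud_carrier[OF assms]])
qed

lemma ud_trace: assumes "unitary_mat n U"
  shows "mtrace (ud n U g) = (\<Sum>a<n. g a)"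
proof -
  note u = unitaryD[OF assms]
  have "mtrace (ud n U g) = (\<Sum>i<n. \<Sum>a<n. U $$ (i,a) * g a * cnj (U $$ (i,a)))"
    unfolding mtrace_def using u(1) by (simp add: ud_index carrier_matD[OF ud_carrier[OF u(1)]])
  also have "\<dots> = (\<Sum>a<n. g a * (\<Sum>i<n. cnj (U $$ (i,a)) * U $$ (i,a)))"
    by (subst sum.swap) (simp add: sum_distrib_left mult_ac)
  also have "\<dots> = (\<Sum>a<n. g a)"
    by (rule sum.cong) (simp_all add: unitary_adj_col[OF assms])
  finally show ?thesis .
qed

lemma ud_pow: assumes "unitary_mat n U"
  shows "ud n U g ^\<^sub>m k = ud n U (\<lambda>a. g a ^ k)"
proof (induction k)
  case 0
  have "ud n U g ^\<^sub>m 0 = 1\<^sub>m n" using unitaryD(1)[OF assms] by (simp add: carrier_matD[OF ud_carrier])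
  then show ?case using ud_one[OF assms] by simp
next
  case (Suc k)
  then show ?case by (simp add: ud_mult[OF assms] mult.commute)
qed

lemma ud_exp: assumes "unitary_mat n U"
  shows "mat_exp (ud n U g) = ud n U (\<lambda>a. exp (g a))"
proof -
  note u = unitaryD[OF assms]
  note cU = carrier_matD[OF ud_carrier[OF u(1)]]
  show ?thesis
  proof (rule ud_eqI[OF u(1)])
    show "mat_exp (ud n U g) \<in> carrier_mat n n" unfolding mat_exp_def using cU by simp
    fix i j assume ij: "i < n" "j < n"
    have "mat_exp (ud n U g) $$ (i,j) = (\<Sum>k. (ud n U g ^\<^sub>m k) $$ (i,j) / of_nat (fact k))"
      unfolding mat_exp_def using cU ij by simp
    also have "\<dots> = (\<Sum>k. \<Sum>a<n. U $$ (i,a) * g a ^ k * cnj (U $$ (j,a)) / fact k)"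
      using ij u(1) by (simp add: ud_pow[OF assms] ud_index sum_divide_distrib)
    also have "\<dots> = (\<Sum>a<n. U $$ (i,a) * exp (g a) * cnj (U $$ (j,a)))"
    proof (rule sums_unique[symmetric], rule sums_sum)
      fix a
      have "(\<lambda>k. g a ^ k / fact k) sums exp (g a)"
        using exp_converges[of "g a"] by (simp add: scaleR_conv_of_real divide_inverse mult.commute)
      from sums_mult[OF sums_mult2[OF this, of "cnj (U $$ (j,a))"], of "U $$ (i,a)"]
      show "(\<lambda>k. U $$ (i,a) * g a ^ k * cnj (U $$ (j,a)) / fact k) sums (U $$ (i,a) * exp (g a) * cnj (U $$ (j,a)))"
        by (simp add: mult_ac)
    qed
    finally show "mat_exp (ud n U g) $$ (i,j) = (\<Sum>a<n. U $$ (i,a) * exp (g a) * cnj (U $$ (j,a)))" .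
  qed
qed


lemma unitary_cancel: assumes "unitary_mat n U" "X \<in> carrier_mat n k"
  shows "mat_adjoint U * (U * X) = X" "U * (mat_adjoint U * X) = X"
proof -
  note u = unitaryD[OF assms(1)]
  have "mat_adjoint U * (U * X) = (mat_adjoint U * U) * X"
    by (rule assoc_mult_mat[symmetric, of _ n n _ n _ k]) (use u assms in auto)
  then show "mat_adjoint U * (U * X) = X" using u assms by simp
  have "U * (mat_adjoint U * X) = (U * mat_adjoint U) * X"
    by (rule assoc_mult_mat[symmetric, of _ n n _ n _ k]) (use u assms in auto)
  then show "U * (mat_adjoint U * X) = X" using u assms by simp
qed

lemma if0_mult: "(if P then a else 0) * (b::complex) = (if P then a * b else 0)"
  "b * (if P then a else 0) = (if P then b * a else 0)" by simp_all

lemma dg_mult_left: "W \<in> carrier_mat n n \<Longrightarrow> i < n \<Longrightarrow> j < n \<Longrightarrow> (dg n g * W) $$ (i,j) = g i * W $$ (i,j)"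
  by (simp add: mult_index' carrier_matD if0_mult del: index_mult_mat(1))
lemma dg_mult_right: "W \<in> carrier_mat n n \<Longrightarrow> i < n \<Longrightarrow> j < n \<Longrightarrow> (W * dg n g) $$ (i,j) = W $$ (i,j) * g j"
  by (simp add: mult_index' carrier_matD if0_mult del: index_mult_mat(1))

lemma herm_core:
  assumes U: "unitary_mat n U" and V: "unitary_mat n V"
  and eq: "ud n U (\<lambda>a. of_real (l a)) = ud n V (\<lambda>a. of_real (l' a))"
  shows "ud n U (\<lambda>a. of_real (f (l a))) = ud n V (\<lambda>a. of_real (f (l' a)))"
proof -
  note u = unitaryD[OF U] and v = unitaryD[OF V]
  have [simp]: "mat_adjoint U \<in> carrier_mat n n" "mat_adjoint V \<in> carrier_mat n n" using u v by auto
  note s = assoc_mult_mat[of _ n n _ n _ n] mult_carrier_mat[of _ n n _ n]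
    unitary_cancel[OF U, of _ n] unitary_cancel[OF V, of _ n] u v right_mult_one_mat[of _ n n] left_mult_one_mat[of _ n n]
  define W where "W = mat_adjoint U * V"
  have W: "W \<in> carrier_mat n n" unfolding W_def using u v by (simp add: s)
  define G where "G = dg n (\<lambda>a. complex_of_real (l a))"
  define G' where "G' = dg n (\<lambda>a. complex_of_real (l' a))"
  define F where "F = dg n (\<lambda>a. complex_of_real (f (l a)))"
  define F' where "F' = dg n (\<lambda>a. complex_of_real (f (l' a)))"
  have [simp]: "G \<in> carrier_mat n n" "G' \<in> carrier_mat n n" "F \<in> carrier_mat n n" "F' \<in> carrier_mat n n"
    unfolding G_def G'_def F_def F'_def by auto
  have e1: "G * W = mat_adjoint U * (U * G * mat_adjoint U) * V"
    unfolding W_def using u v by (simp add: s)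
  have e2: "W * G' = mat_adjoint U * (V * G' * mat_adjoint V) * V"
    unfolding W_def using u v by (simp add: s)
  have GW: "G * W = W * G'" unfolding e1 e2 using eq unfolding ud_def G_def G'_def by simp
  have FW: "F * W = W * F'"
  proof (rule eq_matI)
    fix i j assume ij: "i < dim_row (W * F')" "j < dim_col (W * F')"
    then have ij: "i < n" "j < n" using W unfolding F'_def by auto
    have "(G * W) $$ (i,j) = (W * G') $$ (i,j)" using GW by simp
    then have "of_real (l i) * W $$ (i,j) = W $$ (i,j) * of_real (l' j)"
      unfolding G_def G'_def using dg_mult_left[OF W ij] dg_mult_right[OF W ij] by simp
    then have "W $$ (i,j) = 0 \<or> l i = l' j" by (auto simp: mult.commute)
    then show "(F * W) $$ (i,j) = (W * F') $$ (i,j)"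
      unfolding F_def F'_def using dg_mult_left[OF W ij] dg_mult_right[OF W ij] by auto
  qed (use W in \<open>auto simp: F_def F'_def\<close>)
  have e3: "U * (F * W) * mat_adjoint V = U * F * mat_adjoint U"
    unfolding W_def using u v by (simp add: s)
  have e4: "U * (W * F') * mat_adjoint V = V * F' * mat_adjoint V"
    unfolding W_def using u v by (simp add: s)
  show ?thesis using e3 e4 FW unfolding ud_def F_def F'_def by simp
qed

lemma real_diag_dg:
  assumes "D \<in> carrier_mat n n" "diagonal_mat D" "\<forall>i<n. D $$ (i,i) \<in> \<real>"
  shows "D = dg n (\<lambda>a. of_real (Re (D $$ (a,a))))"
proof (rule eq_matI)
  fix i j assume ij: "i < dim_row (dg n (\<lambda>a. of_real (Re (D $$ (a,a)))))" "j < dim_col (dg n (\<lambda>a. of_real (Re (D $$ (a,a)))))"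
  then have ij: "i < n" "j < n" by auto
  show "D $$ (i,j) = dg n (\<lambda>a. of_real (Re (D $$ (a,a)))) $$ (i,j)"
  proof (cases "i = j")
    case True
    then show ?thesis using assms(3) ij by (auto simp: complex_is_Real_iff complex_eq_iff)
  next
    case False
    then show ?thesis using assms(1,2) ij unfolding diagonal_mat_def by auto
  qed
qed (use assms in auto)

lemma herm_fun_ud:
  assumes U: "unitary_mat n U"
  shows "herm_fun f (ud n U (\<lambda>a. of_real (l a))) = ud n U (\<lambda>a. of_real (f (l a)))"
proof -
  let ?A = "ud n U (\<lambda>a. of_real (l a))"
  have dA: "dim_row ?A = n" using unitaryD(1)[OF U] by (simp add: carrier_matD[OF ud_carrier])
  let ?P = "\<lambda>B. \<exists>U D. unitary_mat n U \<and> D \<in> carrier_mat n n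
      \<and> diagonal_mat D \<and> (\<forall>i < n. D $$ (i,i) \<in> \<real>)
      \<and> ?A = U * D * mat_adjoint U
      \<and> B = U * mat n n (\<lambda>(i,j). if i = j then complex_of_real (f (Re (D $$ (i,i)))) else 0)
            * mat_adjoint U"
  have mdg: "mat n n (\<lambda>(i,j). if i = j then complex_of_real (f (Re (D $$ (i,i)))) else 0)
      = dg n (\<lambda>a. of_real (f (Re (D $$ (a,a)))))" for D
    unfolding dg_def by simp
  have ex: "?P (ud n U (\<lambda>a. of_real (f (l a))))"
  proof (intro exI conjI)
    show "unitary_mat n U" by fact
    show "dg n (\<lambda>a. of_real (l a)) \<in> carrier_mat n n" by simp
    show "diagonal_mat (dg n (\<lambda>a. of_real (l a)))" unfolding diagonal_mat_def by simp
    show "\<forall>i<n. dg n (\<lambda>a. of_real (l a)) $$ (i,i) \<in> \<real>" by simp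
    show "?A = U * dg n (\<lambda>a. of_real (l a)) * mat_adjoint U" unfolding ud_def ..
    show "ud n U (\<lambda>a. of_real (f (l a))) = U * mat n n (\<lambda>(i,j). if i = j then complex_of_real (f (Re (dg n (\<lambda>a. of_real (l a)) $$ (i,i)))) else 0) * mat_adjoint U"
      unfolding mdg ud_def by (rule arg_cong[where f = "\<lambda>x. U * x * mat_adjoint U"], rule eq_matI) auto
  qed
  have uniq: "B = ud n U (\<lambda>a. of_real (f (l a)))" if "?P B" for B
  proof -
    from that obtain V D where V: "unitary_mat n V" and D: "D \<in> carrier_mat n n" "diagonal_mat D"
      "\<forall>i < n. D $$ (i,i) \<in> \<real>" and AV: "?A = V * D * mat_adjoint V"
      and B: "B = V * mat n n (\<lambda>(i,j). if i = j then complex_of_real (f (Re (D $$ (i,i)))) else 0) * mat_adjoint V"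
      by blast
    have Dd: "D = dg n (\<lambda>a. of_real (Re (D $$ (a,a))))" by (rule real_diag_dg[OF D])
    have "?A = ud n V (\<lambda>a. of_real (Re (D $$ (a,a))))" using AV Dd unfolding ud_def by metis
    from herm_core[OF U V this, of f]
    show ?thesis unfolding B mdg ud_def by simp
  qed
  show ?thesis unfolding herm_fun_def dA
    by (rule someI2[of ?P, OF ex]) (use uniq in blast)
qed


lemma dsum_dims[simp]: "dim_row (dsum_mat A B) = dim_row A + dim_row B" "dim_col (dsum_mat A B) = dim_col A + dim_col B"
  unfolding dsum_mat_def by simp_all

lemma dsum_carrier[simp]: "A \<in> carrier_mat n n \<Longrightarrow> B \<in> carrier_mat m m \<Longrightarrow> dsum_mat A B \<in> carrier_mat (n+m) (n+m)"
  unfolding dsum_mat_def by (rule four_block_carrier_mat)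

lemma dsum_index: assumes "i < dim_row A + dim_row B" "j < dim_col A + dim_col B"
  shows "dsum_mat A B $$ (i,j) = (if i < dim_row A then if j < dim_col A then A $$ (i,j) else 0
      else if j < dim_col A then 0 else B $$ (i - dim_row A, j - dim_col A))"
  using assms unfolding dsum_mat_def by simp

lemma dsum_mult: assumes "A \<in> carrier_mat n n" "B \<in> carrier_mat m m" "C \<in> carrier_mat n n" "D \<in> carrier_mat m m"
  shows "dsum_mat A B * dsum_mat C D = dsum_mat (A * C) (B * D)"
proof -
  note d = carrier_matD[OF assms(1)] carrier_matD[OF assms(2)] carrier_matD[OF assms(3)] carrier_matD[OF assms(4)]
  have "dsum_mat A B * dsum_mat C D = four_block_mat (A * C + 0\<^sub>m n m * 0\<^sub>m m n) (A * 0\<^sub>m n m + 0\<^sub>m n m * D)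
      (0\<^sub>m m n * C + B * 0\<^sub>m m n) (0\<^sub>m m n * 0\<^sub>m n m + B * D)"
    unfolding dsum_mat_def d
    by (rule mult_four_block_mat) (use assms in auto)
  also have "\<dots> = dsum_mat (A * C) (B * D)"
    unfolding dsum_mat_def using assms d by simp
  finally show ?thesis .
qed

lemma dsum_add: assumes "A \<in> carrier_mat n n" "B \<in> carrier_mat m m" "C \<in> carrier_mat n n" "D \<in> carrier_mat m m"
  shows "dsum_mat A B + dsum_mat C D = dsum_mat (A + C) (B + D)"
proof -
  note d = carrier_matD[OF assms(1)] carrier_matD[OF assms(2)] carrier_matD[OF assms(3)] carrier_matD[OF assms(4)]
  show ?thesis by (rule eq_matI) (use d in \<open>auto simp: dsum_index\<close>)
qed

lemma dsum_smult: assumes "A \<in> carrier_mat n n" "B \<in> carrier_mat m m"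
  shows "c \<cdot>\<^sub>m dsum_mat A B = dsum_mat (c \<cdot>\<^sub>m A) (c \<cdot>\<^sub>m B)"
proof -
  note d = carrier_matD[OF assms(1)] carrier_matD[OF assms(2)]
  show ?thesis by (rule eq_matI) (use d in \<open>auto simp: dsum_index\<close>)
qed

lemma dsum_adj: assumes "A \<in> carrier_mat n n" "B \<in> carrier_mat m m"
  shows "mat_adjoint (dsum_mat A B) = dsum_mat (mat_adjoint A) (mat_adjoint B)"
proof -
  note d = carrier_matD[OF assms(1)] carrier_matD[OF assms(2)]
  show ?thesis by (rule eq_matI) (use d in \<open>auto simp: dsum_index\<close>)
qed

lemma dsum_eq_iff: assumes "A \<in> carrier_mat n n" "B \<in> carrier_mat m m" "C \<in> carrier_mat n n" "D \<in> carrier_mat m m"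
  shows "dsum_mat A B = dsum_mat C D \<longleftrightarrow> A = C \<and> B = D"
proof
  note d = carrier_matD[OF assms(1)] carrier_matD[OF assms(2)] carrier_matD[OF assms(3)] carrier_matD[OF assms(4)]
  assume e: "dsum_mat A B = dsum_mat C D"
  have "A = C"
  proof (rule eq_matI)
    fix i j assume "i < dim_row C" "j < dim_col C"
    then have ij: "i < n" "j < n" using d by auto
    have "dsum_mat A B $$ (i,j) = dsum_mat C D $$ (i,j)" using e by simp
    then show "A $$ (i,j) = C $$ (i,j)" using d ij by (simp add: dsum_index)
  qed (use d in auto)
  moreover have "B = D"
  proof (rule eq_matI)
    fix i j assume "i < dim_row D" "j < dim_col D"
    then have ij: "i < m" "j < m" using d by auto
    have "dsum_mat A B $$ (i+n,j+n) = dsum_mat C D $$ (i+n,j+n)" using e by simp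
    then show "B $$ (i,j) = D $$ (i,j)" using d ij by (simp add: dsum_index)
  qed (use d in auto)
  ultimately show "A = C \<and> B = D" ..
qed simp

lemma dsum_unitary: assumes "unitary_mat n U" "unitary_mat m V"
  shows "unitary_mat (n+m) (dsum_mat U V)"
proof -
  note u = unitaryD[OF assms(1)] and v = unitaryD[OF assms(2)]
  have o: "dsum_mat (1\<^sub>m n) (1\<^sub>m m) = 1\<^sub>m (n+m)" unfolding dsum_mat_def by simp
  have a: "mat_adjoint U \<in> carrier_mat n n" "mat_adjoint V \<in> carrier_mat m m" using u v by auto
  show ?thesis unfolding unitary_mat_def
    using u v a by (simp add: dsum_adj dsum_mult[OF u(1) v(1) a] dsum_mult[OF a u(1) v(1)] o)
qed

definition app :: "nat \<Rightarrow> (nat \<Rightarrow> 'a) \<Rightarrow> (nat \<Rightarrow> 'a) \<Rightarrow> nat \<Rightarrow> 'a" where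
  "app n g h i = (if i < n then g i else h (i - n))"

lemma dsum_dg: "dsum_mat (dg n g) (dg m h) = dg (n+m) (app n g h)"
  by (rule eq_matI) (auto simp: dsum_index app_def)

lemma dsum_ud: assumes "unitary_mat n U" "unitary_mat m V"
  shows "dsum_mat (ud n U g) (ud m V h) = ud (n+m) (dsum_mat U V) (app n g h)"
proof -
  note u = unitaryD[OF assms(1)] and v = unitaryD[OF assms(2)]
  have a: "mat_adjoint U \<in> carrier_mat n n" "mat_adjoint V \<in> carrier_mat m m" using u v by auto
  have b: "U * dg n g \<in> carrier_mat n n" "V * dg m h \<in> carrier_mat m m" using u v by auto
  show ?thesis unfolding ud_def using u v
    by (simp add: dsum_adj dsum_mult[OF b a] dsum_mult[OF u(1) v(1) dg_carrier dg_carrier] dsum_dg[symmetric])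
qed

lemma app_fun: "app n (\<lambda>a. f (g a)) (\<lambda>a. f (h a)) = (\<lambda>a. f (app n g h a))"
  by (auto simp: app_def)


lemma adj_mult: fixes X Y :: "complex mat" assumes "X \<in> carrier_mat n k" "Y \<in> carrier_mat k m"
  shows "mat_adjoint (X * Y) = mat_adjoint Y * mat_adjoint X"
proof -
  note d = carrier_matD[OF assms(1)] carrier_matD[OF assms(2)]
  show ?thesis
  proof (rule eq_matI)
    fix i j assume ij: "i < dim_row (mat_adjoint Y * mat_adjoint X)" "j < dim_col (mat_adjoint Y * mat_adjoint X)"
    then have ij: "i < m" "j < n" using d by auto
    have "mat_adjoint (X * Y) $$ (i,j) = cnj ((X * Y) $$ (j,i))" using ij d by simp
    also have "\<dots> = (\<Sum>l<k. cnj (X $$ (j,l)) * cnj (Y $$ (l,i)))"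
      using ij d by (simp add: mult_index' del: index_mult_mat(1))
    also have "\<dots> = (\<Sum>l<k. mat_adjoint Y $$ (i,l) * mat_adjoint X $$ (l,j))"
      by (rule sum.cong) (use ij d in auto)
    also have "\<dots> = (mat_adjoint Y * mat_adjoint X) $$ (i,j)"
      using ij d by (simp add: mult_index' del: index_mult_mat(1))
    finally show "mat_adjoint (X * Y) $$ (i,j) = (mat_adjoint Y * mat_adjoint X) $$ (i,j)" .
  qed (use d in auto)
qed

lemma adj_adj[simp]: "mat_adjoint (mat_adjoint X) = (X :: complex mat)"
proof (rule eq_matI)
  fix i j assume ij: "i < dim_row X" "j < dim_col X"
  have "mat_adjoint (mat_adjoint X) $$ (i,j) = cnj (mat_adjoint X $$ (j,i))"
    by (rule adj_index) (use ij in simp_all)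
  also have "\<dots> = X $$ (i,j)" using ij by simp
  finally show "mat_adjoint (mat_adjoint X) $$ (i,j) = X $$ (i,j)" .
qed auto

lemma adj_one[simp]: "mat_adjoint (1\<^sub>m n) = (1\<^sub>m n :: complex mat)"
  by (rule eq_matI) auto

lemma unitary_one: "unitary_mat n (1\<^sub>m n)"
  unfolding unitary_mat_def by simp

lemma unitary_mult: assumes U: "unitary_mat n U" and V: "unitary_mat n V"
  shows "unitary_mat n (U * V)"
proof -
  note u = unitaryD[OF U] and v = unitaryD[OF V]
  have [simp]: "mat_adjoint U \<in> carrier_mat n n" "mat_adjoint V \<in> carrier_mat n n" using u v by auto
  note s = assoc_mult_mat[of _ n n _ n _ n] mult_carrier_mat[of _ n n _ n]
    unitary_cancel[OF U, of _ n] unitary_cancel[OF V, of _ n] u v right_mult_one_mat[of _ n n] left_mult_one_mat[of _ n n]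
  show ?thesis unfolding unitary_mat_def using u v by (simp add: adj_mult[of _ n n _ n] s)
qed

lemma ud_conj: assumes W: "unitary_mat n W" and V: "unitary_mat n V"
  shows "W * ud n V g * mat_adjoint W = ud n (W * V) g"
proof -
  note u = unitaryD[OF W] and v = unitaryD[OF V]
  have [simp]: "mat_adjoint W \<in> carrier_mat n n" "mat_adjoint V \<in> carrier_mat n n" using u v by auto
  note s = assoc_mult_mat[of _ n n _ n _ n] mult_carrier_mat[of _ n n _ n] u v
  show ?thesis unfolding ud_def using u v by (simp add: adj_mult[of _ n n _ n] s)
qed

lemma cprod_self: assumes "w \<in> carrier_vec n" "w \<noteq> 0\<^sub>v n"
  shows "w \<bullet>c w = complex_of_real (Re (w \<bullet>c w)) \<and> Re (w \<bullet>c w) > 0"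
proof -
  have "w \<bullet>c w > 0" using assms by simp
  then show ?thesis by (auto simp: less_complex_def complex_eq_iff)
qed

lemma unit_ext: assumes u: "u \<in> carrier_vec n" and u1: "u \<bullet>c u = 1"
  shows "\<exists>W. unitary_mat n W \<and> col W 0 = u"
proof -
  interpret cof_vec_space n "TYPE(complex)" .
  have u0: "u \<noteq> 0\<^sub>v n" using u1 u by auto
  have n: "n > 0" using u u1 by (cases n) (auto simp: scalar_prod_def)
  define b where "b = basis_completion u"
  from basis_completion[OF u u0, folded b_def]
  have dist_b: "distinct b" and indep: "\<not> lin_dep (set b)" and b: "set b \<subseteq> carrier_vec n"
    and len_b: "length b = n" and hdb: "hd b = u" by auto
  from hdb len_b n obtain vs where bv: "b = u # vs" by (cases b) auto
  define ws where "ws = gram_schmidt n b"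
  from gram_schmidt_result[OF b dist_b indep refl, folded ws_def]
  have wsc: "set ws \<subseteq> carrier_vec n" and orth: "corthogonal ws" and lws: "length ws = n"
    using len_b by auto
  have hdws: "hd ws = u" unfolding ws_def bv by (rule gram_schmidt_hd[OF u])
  have ws0: "ws ! 0 = u" using hdws lws n by (cases ws) auto
  have wsi: "ws ! i \<in> carrier_vec n" if "i < n" for i using wsc lws that by auto
  have nz: "ws ! i \<noteq> 0\<^sub>v n" if "i < n" for i
  proof
    assume "ws ! i = 0\<^sub>v n"
    then have "ws ! i \<bullet>c ws ! i = 0" by simp
    then show False using corthogonalD[OF orth, of i i] that lws by auto
  qed
  define c where "c i = 1 / sqrt (Re (ws ! i \<bullet>c ws ! i))" for i
  define ws' where "ws' = map (\<lambda>i. complex_of_real (c i) \<cdot>\<^sub>v ws ! i) [0..<n]"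
  define W where "W = mat_of_cols n ws'"
  have lws': "length ws' = n" unfolding ws'_def by simp
  have W: "W \<in> carrier_mat n n" unfolding W_def using lws' by (metis mat_of_cols_carrier(1))
  have Wij: "W $$ (k,i) = complex_of_real (c i) * ws ! i $ k" if "k < n" "i < n" for k i
    using that wsi[OF that(2)] unfolding W_def ws'_def mat_of_cols_def by simp
  have WW: "mat_adjoint W * W = 1\<^sub>m n"
  proof (rule eq_matI)
    fix i j assume "i < dim_row (1\<^sub>m n)" "j < dim_col (1\<^sub>m n)"
    then have ij: "i < n" "j < n" by auto
    have "(mat_adjoint W * W) $$ (i,j) = (\<Sum>k<n. cnj (W $$ (k,i)) * W $$ (k,j))"
      using W ij by (simp add: mult_index' carrier_matD del: index_mult_mat(1))
    also have "\<dots> = complex_of_real (c i * c j) * (ws ! j \<bullet>c ws ! i)"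
      using ij wsi[OF ij(1)] wsi[OF ij(2)]
      by (simp add: Wij scalar_prod_def sum_distrib_left atLeast0LessThan mult_ac)
    also have "\<dots> = 1\<^sub>m n $$ (i,j)"
    proof (cases "i = j")
      case True
      from cprod_self[OF wsi[OF ij(1)] nz[OF ij(1)]]
      have p: "ws ! i \<bullet>c ws ! i = complex_of_real (Re (ws ! i \<bullet>c ws ! i))" "Re (ws ! i \<bullet>c ws ! i) > 0" by auto
      have "c i * c i * Re (ws ! i \<bullet>c ws ! i) = 1"
        unfolding c_def using p(2) by (simp add: field_simps)
      then have "complex_of_real (c i * c i) * (ws ! i \<bullet>c ws ! i) = 1"
        by (subst p(1)) (metis of_real_1 of_real_mult)
      then show ?thesis using True ij by simp
    next
      case False
      then have "ws ! j \<bullet>c ws ! i = 0" using corthogonalD[OF orth, of j i] ij lws by auto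
      then show ?thesis using False ij by simp
    qed
    finally show "(mat_adjoint W * W) $$ (i,j) = 1\<^sub>m n $$ (i,j)" .
  qed (use W in auto)
  have WW': "W * mat_adjoint W = 1\<^sub>m n"
    by (rule mat_mult_left_right_inverse[OF _ W WW]) (use W in auto)
  have "c 0 = 1" unfolding c_def ws0 u1 by simp
  then have "col W 0 = u" unfolding W_def using lws' n wsi[OF n] ws0
    by (subst col_mat_of_cols) (auto simp: ws'_def)
  then show ?thesis using W WW WW' unfolding unitary_mat_def by blast
qed


lemma exists_eigen: assumes A: "(A :: complex mat) \<in> carrier_mat n n" and n: "n > 0"
  shows "\<exists>e v. v \<in> carrier_vec n \<and> v \<noteq> 0\<^sub>v n \<and> A *\<^sub>v v = e \<cdot>\<^sub>v v"
proof -
  from degree_monic_char_poly[OF A] have d: "degree (char_poly A) > 0" using n by auto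
  hence "\<not> constant (poly (char_poly A))" by (simp add: constant_degree)
  from fundamental_theorem_of_algebra[OF this] obtain e where "poly (char_poly A) e = 0" by auto
  then have "eigenvalue A e" using eigenvalue_root_char_poly[OF A] by simp
  then obtain v where "eigenvector A v e" unfolding eigenvalue_def by auto
  then show ?thesis unfolding eigenvector_def using A by auto
qed

lemma ud_dims[simp]: "dim_row (ud n U g) = dim_row U" "dim_col (ud n U g) = dim_row U"
  unfolding ud_def by simp_all

lemma ud_one_dim: "mat 1 1 (\<lambda>_. x) = ud 1 (1\<^sub>m 1) (\<lambda>_. x)"
proof (rule eq_matI)
  fix i j assume "i < dim_row (ud 1 (1\<^sub>m 1) (\<lambda>_. x))" "j < dim_col (ud 1 (1\<^sub>m 1) (\<lambda>_. x))"
  then have ij: "i = 0" "j = 0" by auto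
  have "ud 1 (1\<^sub>m 1) (\<lambda>_. x) $$ (0,0) = x" by (subst ud_index) auto
  then show "mat 1 1 (\<lambda>_. x) $$ (i,j) = ud 1 (1\<^sub>m 1) (\<lambda>_. x) $$ (i,j)" using ij by simp
qed auto

lemma spectral: "A \<in> carrier_mat n n \<Longrightarrow> mat_adjoint A = A \<Longrightarrow>
  \<exists>U l. unitary_mat n U \<and> A = ud n U (\<lambda>a. complex_of_real (l a))"
proof (induction n arbitrary: A)
  case 0
  have "A = ud 0 (1\<^sub>m 0) (\<lambda>a. complex_of_real 0)"
    by (rule eq_matI) (use carrier_matD[OF 0(1)] in simp_all)
  then show ?case using unitary_one[of 0] by (intro exI[of _ "1\<^sub>m 0"] exI[of _ "\<lambda>_. 0"] conjI)
next
  case (Suc m)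
  let ?n = "Suc m"
  have A: "A \<in> carrier_mat ?n ?n" and hA: "mat_adjoint A = A" by fact+
  obtain e v where v: "v \<in> carrier_vec ?n" "v \<noteq> 0\<^sub>v ?n" and Av: "A *\<^sub>v v = e \<cdot>\<^sub>v v"
    using exists_eigen[OF A] by blast
  from cprod_self[OF v] have p: "v \<bullet>c v = complex_of_real (Re (v \<bullet>c v))" "Re (v \<bullet>c v) > 0" by blast+
  obtain r where r: "v \<bullet>c v = complex_of_real r" "r > 0" using p by blast
  define c where "c = complex_of_real (1 / sqrt r)"
  define u where "u = c \<cdot>\<^sub>v v"
  have u: "u \<in> carrier_vec ?n" unfolding u_def using v by simp
  have "u \<bullet>c u = c * cnj c * (v \<bullet>c v)"
    unfolding u_def using v by (simp add: scalar_prod_def sum_distrib_left mult_ac del: sum.atLeast0_lessThan_Suc sum.op_ivl_Suc)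
  also have "\<dots> = complex_of_real ((1 / sqrt r) * (1 / sqrt r) * r)"
    unfolding c_def r(1) by (simp only: of_real_mult[symmetric] complex_cnj_complex_of_real)
  also have "(1 / sqrt r) * (1 / sqrt r) * r = 1"
    using r(2) by (simp add: field_simps)
  finally have "u \<bullet>c u = 1" by simp
  note u1 = this
  have Au: "A *\<^sub>v u = e \<cdot>\<^sub>v u" unfolding u_def using mult_mat_vec[OF A v(1)] Av v
    by (simp add: smult_smult_assoc mult.commute)
  obtain W where W: "unitary_mat ?n W" and Wu: "col W 0 = u" using unit_ext[OF u u1] by blast
  note w = unitaryD[OF W]
  have aW: "mat_adjoint W \<in> carrier_mat ?n ?n" using w by simp
  define B where "B = mat_adjoint W * A * W"
  have B: "B \<in> carrier_mat ?n ?n" unfolding B_def using aW A w by (simp add: mult_carrier_mat[of _ ?n ?n _ ?n])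
  have hB: "mat_adjoint B = B" unfolding B_def
    using aW A w hA by (simp add: adj_mult[of _ ?n ?n _ ?n] assoc_mult_mat[of _ ?n ?n _ ?n _ ?n])
  have colB: "col B 0 = e \<cdot>\<^sub>v unit_vec ?n 0"
  proof -
    have "col B 0 = (mat_adjoint W * A) *\<^sub>v col W 0" unfolding B_def
      by (rule col_mult2[of _ ?n ?n _ ?n 0]) (use aW A w(1) in \<open>simp_all add: mult_carrier_mat[of _ ?n ?n _ ?n]\<close>)
    also have "\<dots> = mat_adjoint W *\<^sub>v (A *\<^sub>v u)" unfolding Wu using aW A u by simp
    also have "\<dots> = e \<cdot>\<^sub>v (mat_adjoint W *\<^sub>v col W 0)" unfolding Au Wu
      by (rule mult_mat_vec[OF aW u])
    also have "mat_adjoint W *\<^sub>v col W 0 = col (mat_adjoint W * W) 0"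
      by (rule col_mult2[symmetric, of _ ?n ?n _ ?n 0]) (use aW w(1) in simp_all)
    also have "\<dots> = unit_vec ?n 0" using w by simp
    finally show ?thesis .
  qed
  have Bi0: "B $$ (i,0) = (if i = 0 then e else 0)" if "i < ?n" for i
  proof -
    have "B $$ (i,0) = col B 0 $ i" using carrier_matD[OF B] that by simp
    then show ?thesis unfolding colB using that by simp
  qed
  have Bsym: "B $$ (i,j) = cnj (B $$ (j,i))" if "i < ?n" "j < ?n" for i j
  proof -
    have "B $$ (i,j) = mat_adjoint B $$ (i,j)" using hB by simp
    then show ?thesis using carrier_matD[OF B] that by simp
  qed
  have eR: "e = complex_of_real (Re e)"
  proof -
    have "e = cnj e" using Bsym[of 0 0] Bi0[of 0] by simp
    then show ?thesis by (simp add: complex_eq_iff)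
  qed
  have B0j: "B $$ (0,j) = (if j = 0 then e else 0)" if "j < ?n" for j
    using Bsym[of 0 j] Bi0[of j] that eR by (auto simp: complex_eq_iff)
  define C where "C = mat m m (\<lambda>(i,j). B $$ (Suc i, Suc j))"
  have C: "C \<in> carrier_mat m m" unfolding C_def by simp
  have hC: "mat_adjoint C = C"
  proof (rule eq_matI)
    fix i j assume "i < dim_row C" "j < dim_col C"
    then have ij: "i < m" "j < m" using carrier_matD[OF C] by simp_all
    then show "mat_adjoint C $$ (i,j) = C $$ (i,j)" unfolding C_def using Bsym[of "Suc i" "Suc j"] by simp
  qed (use carrier_matD[OF C] in simp_all)
  from Suc.IH[OF C hC] obtain V l' where V: "unitary_mat m V" and CV: "C = ud m V (\<lambda>a. complex_of_real (l' a))"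
    by blast
  define l where "l = app 1 (\<lambda>_. Re e) l'"
  have "B = dsum_mat (mat 1 1 (\<lambda>_. complex_of_real (Re e))) C"
  proof (rule eq_matI)
    fix i j assume "i < dim_row (dsum_mat (mat 1 1 (\<lambda>_. complex_of_real (Re e))) C)"
      "j < dim_col (dsum_mat (mat 1 1 (\<lambda>_. complex_of_real (Re e))) C)"
    then have ij: "i < ?n" "j < ?n" using carrier_matD[OF C] by simp_all
    show "B $$ (i,j) = dsum_mat (mat 1 1 (\<lambda>_. complex_of_real (Re e))) C $$ (i,j)"
    proof (cases "i = 0")
      case True
      then show ?thesis using ij C B0j[of j] eR by (simp add: dsum_index)
    next
      case False
      note i = this
      show ?thesis
      proof (cases "j = 0")
        case True
        then show ?thesis using ij C Bi0[of i] i by (simp add: dsum_index)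
      next
        case False
        then obtain i' j' where "i = Suc i'" "j = Suc j'" using i by (cases i; cases j) auto
        then show ?thesis using ij C by (simp add: dsum_index C_def)
      qed
    qed
  qed (use carrier_matD[OF B] carrier_matD[OF C] in simp_all)
  also have "\<dots> = ud (1 + m) (dsum_mat (1\<^sub>m 1) V) (\<lambda>a. complex_of_real (l a))"
    unfolding ud_one_dim CV l_def app_fun[symmetric] by (rule dsum_ud[OF unitary_one V])
  finally have BU: "B = ud ?n (dsum_mat (1\<^sub>m 1) V) (\<lambda>a. complex_of_real (l a))" by simp
  have V': "unitary_mat ?n (dsum_mat (1\<^sub>m 1) V)" using dsum_unitary[OF unitary_one[of 1] V] by simp
  have "A = W * B * mat_adjoint W" unfolding B_def using aW A w
    by (simp add: assoc_mult_mat[of _ ?n ?n _ ?n _ ?n] mult_carrier_mat[of _ ?n ?n _ ?n]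
        unitary_cancel[OF W, of _ ?n])
  also have "\<dots> = ud ?n (W * dsum_mat (1\<^sub>m 1) V) (\<lambda>a. complex_of_real (l a))"
    unfolding BU by (rule ud_conj[OF W V'])
  finally show ?case using unitary_mult[OF W V'] by (intro exI[of _ "W * dsum_mat (1\<^sub>m 1) V"] exI[of _ l] conjI)
qed


lemma dens_aux: "(y::real) > 0 \<Longrightarrow> pi / (2 * ((y + inverse y) / 2 + 1)) = pi * y / (y + 1)^2"
proof -
  assume y: "y > 0"
  have "(y + inverse y) / 2 + 1 = (y + 1)^2 / (2 * y)" using y by (simp add: field_simps power2_eq_square)
  then show ?thesis using y by (simp add: field_simps)
qed

lemma dens_eq: "pi / (2 * (cosh (pi * t) + 1)) = pi * exp (pi * t) / (exp (pi * t) + 1)^2"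
proof -
  have c: "cosh (pi * t) = (exp (pi * t) + inverse (exp (pi * t))) / 2"
    by (simp add: cosh_def exp_minus)
  show ?thesis unfolding c by (rule dens_aux) simp
qed

lemma beta0_total: "(LBINT x=-\<infinity>..\<infinity>. pi * exp (pi * x) / (exp (pi * x) + 1)^2) = 1"
  and beta0_integrable: "set_integrable lborel (einterval (-\<infinity>) \<infinity>) (\<lambda>x. pi * exp (pi * x) / (exp (pi * x) + 1)^2)"
proof -
  define F where "F x = - 1 / (exp (pi * x) + 1)" for x :: real
  have D: "DERIV F x :> pi * exp (pi * x) / (exp (pi * x) + 1)^2" for x
  proof -
    have "exp (pi * x) > 0" by simp
    then have p: "exp (pi * x) + 1 \<noteq> 0" by linarith
    show ?thesis unfolding F_def
      by (auto intro!: derivative_eq_intros simp: p power2_eq_square)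
  qed
  have C: "isCont (\<lambda>x. pi * exp (pi * x) / (exp (pi * x) + 1)^2) x" for x :: real
  proof -
    have "exp (pi * x) > 0" by simp
    then have "exp (pi * x) + 1 \<noteq> 0" by linarith
    then have p: "(exp (pi * x) + 1)^2 \<noteq> 0" by simp
    show ?thesis using p by (intro continuous_intros) auto
  qed
  have L1: "((F \<circ> real_of_ereal) \<longlongrightarrow> -1) (at_right (-\<infinity>))"
    unfolding ereal_tendsto_simps F_def by real_asymp
  have L2: "((F \<circ> real_of_ereal) \<longlongrightarrow> 0) (at_left \<infinity>)"
    unfolding ereal_tendsto_simps F_def by real_asymp
  have nn: "AE x in lborel. -\<infinity> < ereal x \<longrightarrow> ereal x < \<infinity> \<longrightarrow> 0 \<le> pi * exp (pi * x) / (exp (pi * x) + 1)^2"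
    by (intro AE_I2) simp
  note r = interval_integral_FTC_nonneg[of "-\<infinity>" "\<infinity>" F, OF _ D C nn L1 L2]
  show "(LBINT x=-\<infinity>..\<infinity>. pi * exp (pi * x) / (exp (pi * x) + 1)^2) = 1" using r by simp
  show "set_integrable lborel (einterval (-\<infinity>) \<infinity>) (\<lambda>x. pi * exp (pi * x) / (exp (pi * x) + 1)^2)"
    using r by simp
qed

lemma M: "(\<lambda>x::real. ennreal (pi * exp (pi * x) / (exp (pi * x) + 1)^2)) \<in> borel_measurable lborel"
  by measurable

lemma beta0_measure: "measure beta0 (space beta0) = 1"
proof -
  let ?g = "\<lambda>x::real. pi * exp (pi * x) / (exp (pi * x) + 1)^2"
  have int: "integrable lborel ?g" using beta0_integrable unfolding set_integrable_def by simp
  have i1: "integral\<^sup>L lborel ?g = 1"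
    using beta0_total unfolding interval_lebesgue_integral_def set_lebesgue_integral_def by simp
  have "(\<integral>\<^sup>+ x. ennreal (?g x) \<partial>lborel) = ennreal (integral\<^sup>L lborel ?g)"
    by (rule nn_integral_eq_integral[OF int]) simp
  then have nn1: "(\<integral>\<^sup>+ x. ennreal (?g x) \<partial>lborel) = 1" using i1 by simp
  have b: "beta0 = density lborel (\<lambda>x. ennreal (?g x))" unfolding beta0_def dens_eq ..
  have "emeasure beta0 UNIV = (\<integral>\<^sup>+ x. ennreal (?g x) * indicator UNIV x \<partial>lborel)"
    unfolding b by (rule emeasure_density[OF M]) simp
  also have "\<dots> = (\<integral>\<^sup>+ x. ennreal (?g x) \<partial>lborel)" by simp
  finally have "emeasure beta0 UNIV = 1" using nn1 by simp
  moreover have "space beta0 = UNIV" unfolding beta0_def by simp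
  ultimately show ?thesis by (simp add: measure_def)
qed

lemma beta0_const: "integral\<^sup>L beta0 (\<lambda>t. c) = (c :: complex)"
  by (simp add: beta0_measure)


definition Lc :: "complex mat \<Rightarrow> complex mat \<Rightarrow> complex \<Rightarrow> complex \<Rightarrow> complex mat" where
  "Lc H K a b = a \<cdot>\<^sub>m H + b \<cdot>\<^sub>m K"

context fixes H K :: "complex mat" and d :: nat
  assumes HK: "H \<in> carrier_mat d d" "K \<in> carrier_mat d d"
begin

lemma Lc_carrier: "Lc H K a b \<in> carrier_mat d d"
  unfolding Lc_def using HK by simp

lemma Lc_index: "i < d \<Longrightarrow> j < d \<Longrightarrow> Lc H K a b $$ (i,j) = a * H $$ (i,j) + b * K $$ (i,j)"
  unfolding Lc_def using HK by simp

lemma Lc_eqI: assumes "X \<in> carrier_mat d d" "\<And>i j. i < d \<Longrightarrow> j < d \<Longrightarrow> X $$ (i,j) = a * H $$ (i,j) + b * K $$ (i,j)"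
  shows "X = Lc H K a b"
  by (rule eq_matI) (use assms carrier_matD[OF assms(1)] carrier_matD[OF Lc_carrier] in \<open>simp_all add: Lc_index\<close>)

lemma Lc_add: "Lc H K a b + Lc H K c e = Lc H K (a + c) (b + e)"
  by (rule Lc_eqI) (use Lc_carrier carrier_matD[OF Lc_carrier] in \<open>simp_all add: Lc_index algebra_simps\<close>)

lemma Lc_mult_index: assumes ij: "i < d" "j < d"
  shows "(Lc H K a b * Lc H K c e) $$ (i,j) = a * c * (H * H) $$ (i,j) + a * e * (H * K) $$ (i,j)
     + b * c * (K * H) $$ (i,j) + b * e * (K * K) $$ (i,j)"
proof -
  note dH = carrier_matD[OF HK(1)] and dK = carrier_matD[OF HK(2)] and dL = carrier_matD[OF Lc_carrier]
  have "(Lc H K a b * Lc H K c e) $$ (i,j) = (\<Sum>k<d. (a * H $$ (i,k) + b * K $$ (i,k)) * (c * H $$ (k,j) + e * K $$ (k,j)))"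
    using ij dL by (simp add: mult_index' Lc_index del: index_mult_mat(1))
  also have "\<dots> = a * c * (\<Sum>k<d. H $$ (i,k) * H $$ (k,j)) + a * e * (\<Sum>k<d. H $$ (i,k) * K $$ (k,j))
     + b * c * (\<Sum>k<d. K $$ (i,k) * H $$ (k,j)) + b * e * (\<Sum>k<d. K $$ (i,k) * K $$ (k,j))"
    by (simp add: sum_distrib_left sum.distrib algebra_simps)
  also have "\<dots> = a * c * (H * H) $$ (i,j) + a * e * (H * K) $$ (i,j)
     + b * c * (K * H) $$ (i,j) + b * e * (K * K) $$ (i,j)"
    using ij dH dK by (simp add: mult_index' del: index_mult_mat(1))
  finally show ?thesis .
qed

lemma Lc_noncomm: assumes nc: "H * K \<noteq> K * H" and ne: "a * e \<noteq> b * c"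
  shows "Lc H K a b * Lc H K c e \<noteq> Lc H K c e * Lc H K a b"
proof
  assume eq: "Lc H K a b * Lc H K c e = Lc H K c e * Lc H K a b"
  have "H * K = K * H"
  proof (rule eq_matI)
    fix i j assume "i < dim_row (K * H)" "j < dim_col (K * H)"
    then have ij: "i < d" "j < d" using HK by auto
    have "(Lc H K a b * Lc H K c e) $$ (i,j) = (Lc H K c e * Lc H K a b) $$ (i,j)" using eq by simp
    then have "(a * e - b * c) * ((H * K) $$ (i,j) - (K * H) $$ (i,j)) = 0"
      unfolding Lc_mult_index[OF ij] by (simp add: algebra_simps)
    then show "(H * K) $$ (i,j) = (K * H) $$ (i,j)" using ne by simp
  qed (use HK in auto)
  then show False using nc by simp
qed

lemma dsumL_noncomm: assumes nc: "H * K \<noteq> K * H" and ne: "a * b' \<noteq> b * a' \<or> c * e' \<noteq> e * c'"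
  shows "(dsum_mat (Lc H K a b) (Lc H K c e) * dsum_mat (Lc H K a' b') (Lc H K c' e') =
          dsum_mat (Lc H K a' b') (Lc H K c' e') * dsum_mat (Lc H K a b) (Lc H K c e)) \<longleftrightarrow> False"
  using Lc_noncomm[OF nc, of a b' b a'] Lc_noncomm[OF nc, of c e' e c'] ne
  by (simp add: dsum_mult[OF Lc_carrier Lc_carrier Lc_carrier Lc_carrier]
      dsum_eq_iff[OF mult_carrier_mat[OF Lc_carrier Lc_carrier] mult_carrier_mat[OF Lc_carrier Lc_carrier]
        mult_carrier_mat[OF Lc_carrier Lc_carrier] mult_carrier_mat[OF Lc_carrier Lc_carrier]])
    blast

lemma dsumL_add: "dsum_mat (Lc H K a b) (Lc H K c e) + dsum_mat (Lc H K a' b') (Lc H K c' e') =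
    dsum_mat (Lc H K (a + a') (b + b')) (Lc H K (c + c') (e + e'))"
  by (simp add: dsum_add[OF Lc_carrier Lc_carrier Lc_carrier Lc_carrier] Lc_add)

lemma H_Lc: "H = Lc H K 1 0" and K_Lc: "K = Lc H K 0 1"
  and mH_Lc: "- H = Lc H K (-1) 0" and mK_Lc: "- K = Lc H K 0 (-1)"
  by (rule Lc_eqI; use HK carrier_matD[OF HK(1)] carrier_matD[OF HK(2)] in simp)+

end

lemma comm_part:
  assumes "hermitian_mat d H" and "hermitian_mat d K"
    and nc: "H * K \<noteq> K * H"
    and h1: "Hs 1 = dsum_mat H H"
    and h2: "Hs 2 = dsum_mat (- H) (- K)"
    and h3: "Hs 3 = dsum_mat K K"
  shows "(\<forall>j\<in>{1,2,3}. \<forall>k\<in>{1,2,3}. j \<noteq> k \<longrightarrow> Hs j * Hs k \<noteq> Hs k * Hs j)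
    \<and> (\<forall>j\<in>{1,2,3}. \<forall>k\<in>{1,2,3}. \<forall>l\<in>{1,2,3}. k \<noteq> l \<longrightarrow>
          Hs j * (Hs k + Hs l) \<noteq> (Hs k + Hs l) * Hs j)
    \<and> (\<forall>j\<in>{1,2,3}. Hs j * (Hs 1 + Hs 2 + Hs 3) \<noteq> (Hs 1 + Hs 2 + Hs 3) * Hs j)"
proof -
  have HK: "H \<in> carrier_mat d d" "K \<in> carrier_mat d d" using assms(1,2) unfolding hermitian_mat_def by auto
  have e1: "Hs 1 = dsum_mat (Lc H K 1 0) (Lc H K 1 0)" using h1 H_Lc[OF HK] by simp
  have e2: "Hs 2 = dsum_mat (Lc H K (-1) 0) (Lc H K 0 (-1))" using h2 mH_Lc[OF HK] mK_Lc[OF HK] by simp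
  have e3: "Hs 3 = dsum_mat (Lc H K 0 1) (Lc H K 0 1)" using h3 K_Lc[OF HK] by simp
  show ?thesis
    by (simp add: e1 e2 e3 dsumL_add[OF HK] dsumL_noncomm[OF HK nc])
qed


lemma dsum_exp: assumes U: "unitary_mat n U" and V: "unitary_mat m V"
  shows "mat_exp (dsum_mat (ud n U g) (ud m V h)) = dsum_mat (ud n U (\<lambda>a. exp (g a))) (ud m V (\<lambda>a. exp (h a)))"
  by (simp add: dsum_ud[OF U V] ud_exp[OF dsum_unitary[OF U V]] app_fun)

lemma smult_one_mat': "(1::complex) \<cdot>\<^sub>m A = A"
  by (rule eq_matI) auto

lemma exp_cnj_mult: "cnj (exp (c * complex_of_real x)) * exp (c * complex_of_real x) = complex_of_real (exp (2 * Re c * x))"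
proof -
  have "cnj (exp (c * complex_of_real x)) * exp (c * complex_of_real x) = exp (cnj (c * complex_of_real x) + c * complex_of_real x)"
    by (simp add: exp_add exp_cnj)
  also have "cnj (c * complex_of_real x) + c * complex_of_real x = complex_of_real (2 * Re c * x)"
    by (simp add: complex_eq_iff)
  finally show ?thesis by (simp only: exp_of_real)
qed

lemma main_part:
  fixes Hs :: "nat \<Rightarrow> complex mat"
  assumes hH: "hermitian_mat d H" and hK: "hermitian_mat d K"
    and h1: "Hs 1 = dsum_mat H H"
    and h2: "Hs 2 = dsum_mat (- H) (- K)"
    and h3: "Hs 3 = dsum_mat K K"
  shows "mtrace (mat_exp (Hs 1 + Hs 2 + Hs 3)) = mtrace (mat_exp (Hs 1) * mat_exp (Hs 2) * mat_exp (Hs 3))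
    \<and> (\<forall>r::real. r > 0 \<longrightarrow>
         mtrace (mat_exp (complex_of_real r \<cdot>\<^sub>m (Hs 1 + Hs 2 + Hs 3))) =
         integral\<^sup>L beta0 (\<lambda>t. mtrace (mat_abs_pow
            (mat_exp ((1 + \<i> * complex_of_real t) \<cdot>\<^sub>m Hs 1)
             * mat_exp ((1 + \<i> * complex_of_real t) \<cdot>\<^sub>m Hs 2)
             * mat_exp ((1 + \<i> * complex_of_real t) \<cdot>\<^sub>m Hs 3)) r)))"
proof -
  have H: "H \<in> carrier_mat d d" "mat_adjoint H = H" using hH unfolding hermitian_mat_def by auto
  have K: "K \<in> carrier_mat d d" "mat_adjoint K = K" using hK unfolding hermitian_mat_def by auto
  obtain U lH where U: "unitary_mat d U" and HU: "H = ud d U (\<lambda>a. complex_of_real (lH a))"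
    using spectral[OF H] by blast
  obtain V lK where V: "unitary_mat d V" and KV: "K = ud d V (\<lambda>a. complex_of_real (lK a))"
    using spectral[OF K] by blast
  note u = unitaryD[OF U] and v = unitaryD[OF V]
  define W where "W = dsum_mat V U"
  have W: "unitary_mat (d + d) W" unfolding W_def by (rule dsum_unitary[OF V U])
  define l where "l = app d lK lH"
  have app_of: "app d (\<lambda>a. f (lK a)) (\<lambda>a. f (lH a)) = (\<lambda>a. f (l a))" for f :: "real \<Rightarrow> complex"
    unfolding l_def by (rule app_fun)
  have P: "mat_exp (c \<cdot>\<^sub>m Hs 1) * mat_exp (c \<cdot>\<^sub>m Hs 2) * mat_exp (c \<cdot>\<^sub>m Hs 3)
       = ud (d + d) W (\<lambda>a. exp (c * complex_of_real (l a)))" for c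
  proof -
    let ?EU = "\<lambda>s. ud d U (\<lambda>a. exp (s * complex_of_real (lH a)))"
    let ?EV = "\<lambda>s. ud d V (\<lambda>a. exp (s * complex_of_real (lK a)))"
    have cU: "?EU s \<in> carrier_mat d d" for s using u by simp
    have cV: "?EV s \<in> carrier_mat d d" for s using v by simp
    have mH: "- H = ud d U (\<lambda>a. - complex_of_real (lH a))" unfolding HU by (rule ud_uminus[OF u(1)])
    have mK: "- K = ud d V (\<lambda>a. - complex_of_real (lK a))" unfolding KV by (rule ud_uminus[OF v(1)])
    have e1: "mat_exp (c \<cdot>\<^sub>m Hs 1) = dsum_mat (?EU c) (?EU c)"
      unfolding h1 dsum_smult[OF H(1) H(1)] unfolding HU ud_smult[OF u(1)] by (rule dsum_exp[OF U U])
    have e2: "mat_exp (c \<cdot>\<^sub>m Hs 2) = dsum_mat (?EU (-c)) (?EV (-c))"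
    proof -
      have "mat_exp (c \<cdot>\<^sub>m Hs 2) = mat_exp (dsum_mat (ud d U (\<lambda>a. c * - complex_of_real (lH a))) (ud d V (\<lambda>a. c * - complex_of_real (lK a))))"
        unfolding h2 unfolding dsum_smult[OF uminus_carrier_mat[OF H(1)] uminus_carrier_mat[OF K(1)]]
        unfolding mH mK unfolding ud_smult[OF u(1)] ud_smult[OF v(1)] ..
      also have "\<dots> = dsum_mat (?EU (-c)) (?EV (-c))" by (simp add: dsum_exp[OF U V])
      finally show ?thesis .
    qed
    have e3: "mat_exp (c \<cdot>\<^sub>m Hs 3) = dsum_mat (?EV c) (?EV c)"
      unfolding h3 dsum_smult[OF K(1) K(1)] unfolding KV ud_smult[OF v(1)] by (rule dsum_exp[OF V V])
    have b1: "?EU c * ?EU (-c) = 1\<^sub>m d"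
      by (simp add: ud_mult[OF U] exp_minus ud_one[OF U] flip: exp_add)
    have b2: "?EV (-c) * ?EV c = 1\<^sub>m d"
      by (simp add: ud_mult[OF V] exp_minus ud_one[OF V] flip: exp_add)
    have "mat_exp (c \<cdot>\<^sub>m Hs 1) * mat_exp (c \<cdot>\<^sub>m Hs 2) * mat_exp (c \<cdot>\<^sub>m Hs 3)
      = dsum_mat (?EU c * ?EU (-c) * ?EV c) (?EU c * ?EV (-c) * ?EV c)"
      unfolding e1 e2 e3 dsum_mult[OF cU cU cU cV]
      by (rule dsum_mult[OF mult_carrier_mat[OF cU cU] mult_carrier_mat[OF cU cV] cV cV])
    also have "?EU c * ?EV (-c) * ?EV c = ?EU c * (?EV (-c) * ?EV c)"
      by (rule assoc_mult_mat[OF cU cV cV])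
    also have "\<dots> = ?EU c" unfolding b2 by (rule right_mult_one_mat[OF cU])
    also have "?EU c * ?EU (-c) * ?EV c = ?EV c" unfolding b1 by (rule left_mult_one_mat[OF cV])
    also have "dsum_mat (?EV c) (?EU c) = ud (d + d) W (\<lambda>a. exp (c * complex_of_real (l a)))"
      unfolding W_def dsum_ud[OF V U] using app_of[of "\<lambda>x. exp (c * complex_of_real x)"] by simp
    finally show ?thesis .
  qed
  have S: "Hs 1 + Hs 2 + Hs 3 = ud (d + d) W (\<lambda>a. complex_of_real (l a))"
  proof -
    have "Hs 1 + Hs 2 + Hs 3 = dsum_mat (H + - H + K) (H + - K + K)"
      unfolding h1 h2 h3 using H K
      by (simp add: dsum_add[of _ d _ d] add_carrier_mat[of _ d d])
    also have "H + - H + K = K" by (rule eq_matI) (use H K in auto)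
    also have "H + - K + K = H" by (rule eq_matI) (use H K in auto)
    also have "dsum_mat K H = ud (d + d) W (\<lambda>a. complex_of_real (l a))"
      unfolding W_def KV HU dsum_ud[OF V U] using app_of[of complex_of_real] by simp
    finally show ?thesis .
  qed
  have expS: "mat_exp (c \<cdot>\<^sub>m (Hs 1 + Hs 2 + Hs 3)) = ud (d + d) W (\<lambda>a. exp (c * complex_of_real (l a)))" for c
    unfolding S ud_smult[OF unitaryD(1)[OF W]] by (rule ud_exp[OF W])
  have part1: "mtrace (mat_exp (Hs 1 + Hs 2 + Hs 3)) = mtrace (mat_exp (Hs 1) * mat_exp (Hs 2) * mat_exp (Hs 3))"
    using expS[of 1] P[of 1] by (simp add: smult_one_mat')
  have part2: "mtrace (mat_exp (complex_of_real r \<cdot>\<^sub>m (Hs 1 + Hs 2 + Hs 3))) =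
         integral\<^sup>L beta0 (\<lambda>t. mtrace (mat_abs_pow
            (mat_exp ((1 + \<i> * complex_of_real t) \<cdot>\<^sub>m Hs 1)
             * mat_exp ((1 + \<i> * complex_of_real t) \<cdot>\<^sub>m Hs 2)
             * mat_exp ((1 + \<i> * complex_of_real t) \<cdot>\<^sub>m Hs 3)) r))" for r :: real
  proof -
    let ?C = "\<Sum>a<d + d. complex_of_real (exp (r * l a))"
    have lhs: "mtrace (mat_exp (complex_of_real r \<cdot>\<^sub>m (Hs 1 + Hs 2 + Hs 3))) = ?C"
      unfolding expS ud_trace[OF W] by (simp add: exp_of_real flip: of_real_mult)
    have integrand: "mtrace (mat_abs_pow
            (mat_exp ((1 + \<i> * complex_of_real t) \<cdot>\<^sub>m Hs 1)
             * mat_exp ((1 + \<i> * complex_of_real t) \<cdot>\<^sub>m Hs 2)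
             * mat_exp ((1 + \<i> * complex_of_real t) \<cdot>\<^sub>m Hs 3)) r) = ?C" for t
    proof -
      let ?c = "1 + \<i> * complex_of_real t"
      let ?X = "ud (d + d) W (\<lambda>a. exp (?c * complex_of_real (l a)))"
      have "mat_adjoint ?X * ?X = ud (d + d) W (\<lambda>a. cnj (exp (?c * complex_of_real (l a))) * exp (?c * complex_of_real (l a)))"
        unfolding ud_adj[OF unitaryD(1)[OF W]] ud_mult[OF W] ..
      also have "\<dots> = ud (d + d) W (\<lambda>a. complex_of_real (exp (2 * l a)))"
        unfolding exp_cnj_mult by simp
      finally have XX: "mat_adjoint ?X * ?X = ud (d + d) W (\<lambda>a. complex_of_real (exp (2 * l a)))" .
      have "mat_abs ?X = ud (d + d) W (\<lambda>a. complex_of_real (sqrt (exp (2 * l a))))"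
        unfolding mat_abs_def XX by (rule herm_fun_ud[OF W])
      also have "(\<lambda>a. sqrt (exp (2 * l a))) = (\<lambda>a. exp (l a))"
      proof (rule ext)
        fix a
        have "exp (2 * l a) = (exp (l a))^2" using exp_of_nat_mult[of 2 "l a"] by simp
        then show "sqrt (exp (2 * l a)) = exp (l a)" by simp
      qed
      finally have aX: "mat_abs ?X = ud (d + d) W (\<lambda>a. complex_of_real (exp (l a)))" .
      have "mat_abs_pow ?X r = ud (d + d) W (\<lambda>a. complex_of_real (exp (l a) powr r))"
        unfolding mat_abs_pow_def aX by (rule herm_fun_ud[OF W])
      also have "(\<lambda>a. exp (l a) powr r) = (\<lambda>a. exp (r * l a))"
        by (rule ext) (simp add: powr_def)
      finally have "mat_abs_pow ?X r = ud (d + d) W (\<lambda>a. complex_of_real (exp (r * l a)))" .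
      then show ?thesis unfolding P by (simp add: ud_trace[OF W])
    qed
    show ?thesis unfolding lhs integrand beta0_const ..
  qed
  show ?thesis using part1 part2 by blast
qed


theorem mainTheorem6:
  fixes d :: nat and H K :: "complex mat" and Hs :: "nat \<Rightarrow> complex mat"
  assumes "hermitian_mat d H" and "hermitian_mat d K"
    and "H * K \<noteq> K * H"
    and "Hs 1 = dsum_mat H H"
    and "Hs 2 = dsum_mat (- H) (- K)"
    and "Hs 3 = dsum_mat K K"
  shows "(\<forall>j\<in>{1,2,3}. \<forall>k\<in>{1,2,3}. j \<noteq> k \<longrightarrow> Hs j * Hs k \<noteq> Hs k * Hs j)
    \<and> (\<forall>j\<in>{1,2,3}. \<forall>k\<in>{1,2,3}. \<forall>l\<in>{1,2,3}. k \<noteq> l \<longrightarrow>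
          Hs j * (Hs k + Hs l) \<noteq> (Hs k + Hs l) * Hs j)
    \<and> (\<forall>j\<in>{1,2,3}. Hs j * (Hs 1 + Hs 2 + Hs 3) \<noteq> (Hs 1 + Hs 2 + Hs 3) * Hs j)
    \<and> mtrace (mat_exp (Hs 1 + Hs 2 + Hs 3)) = mtrace (mat_exp (Hs 1) * mat_exp (Hs 2) * mat_exp (Hs 3))
    \<and> (\<forall>r::real. r > 0 \<longrightarrow>
         mtrace (mat_exp (complex_of_real r \<cdot>\<^sub>m (Hs 1 + Hs 2 + Hs 3))) =
         integral\<^sup>L beta0 (\<lambda>t. mtrace (mat_abs_pow
            (mat_exp ((1 + \<i> * complex_of_real t) \<cdot>\<^sub>m Hs 1)
             * mat_exp ((1 + \<i> * complex_of_real t) \<cdot>\<^sub>m Hs 2)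
             * mat_exp ((1 + \<i> * complex_of_real t) \<cdot>\<^sub>m Hs 3)) r)))"
proof -
  note c = comm_part[OF assms]
  note m = main_part[OF assms(1,2,4,5,6)]
  show ?thesis
    by (rule conjI[OF conjunct1[OF c] conjI[OF conjunct1[OF conjunct2[OF c]] conjI[OF conjunct2[OF conjunct2[OF c]] m]]])
qed

end
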